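(* Let $X$ be a nontrivial mm-space and $p\in[1,\infty)$. Then for any $r>0$, $$\lim_{n\to\infty}\sup_{x\in X^n}\mu_X^{\otimes n}\big(U_r^{X_p^n}(x)\big)=0.$$
   Context: An mm-space is a triple $(X,d_X,\mu_X)$ with $(X,d_X)$ complete separable metric and $\mu_X$ a Borel probability measure, with $X=\operatorname{supp}\mu_X$ assumed; it is nontrivial if it is not mm-isomorphic to the one-point space (equivalently, its support has more than one point). $X_p^n$ denotes $X^n$ with metric $d(x,x')=(\sum_{i=1}^nd_X(x_i,x_i')^p)^{1/p}$ and measure $\mu_X^{\otimes n}$; $U_r^{X_p^n}(x)$ is the open ball of radius $r$ about $x$ in this metric. *)

theory Defs
  imports "HOL-Probability.Probability"
begin

definition mm_space :: "'a::polish_space measure \<Rightarrow> bool" where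
  "mm_space M \<longleftrightarrow> prob_space M \<and> sets M = sets borel \<and>
     (\<forall>x r. r > 0 \<longrightarrow> emeasure M (ball x r) > 0)"

text \<open>The n-fold product X^n with the l_p metric, points are extensional functions on {..<n}.\<close>
definition lp_dist :: "real \<Rightarrow> nat \<Rightarrow> (nat \<Rightarrow> 'a::metric_space) \<Rightarrow> (nat \<Rightarrow> 'a) \<Rightarrow> real" where
  "lp_dist p n x y = (\<Sum>i<n. dist (x i) (y i) powr p) powr (1 / p)"

definition prod_mm :: "'a measure \<Rightarrow> nat \<Rightarrow> (nat \<Rightarrow> 'a) measure" where
  "prod_mm M n = PiM {..<n} (\<lambda>_. M)"

definition lp_ball :: "'a::metric_space measure \<Rightarrow> real \<Rightarrow> nat \<Rightarrow> (nat \<Rightarrow> 'a) \<Rightarrow> real \<Rightarrow> (nat \<Rightarrow> 'a) set" where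
  "lp_ball M p n x r = {y \<in> space (prod_mm M n). lp_dist p n x y < r}"

end

theory Submission
  imports Defs
begin

lemma ball_sep:
  fixes M :: "'a::polish_space measure"
  assumes "mm_space M" and "\<exists>x y :: 'a. x \<noteq> y"
  obtains \<delta> \<eta> :: real where "\<delta> > 0" "\<eta> > 0" "\<And>c. measure M (ball c \<delta>) \<le> 1 - \<eta>"
proof -
  interpret prob_space M using assms(1) by (simp add: mm_space_def)
  have sM: "sets M = sets borel" using assms(1) by (simp add: mm_space_def)
  obtain a b :: 'a where ab: "a \<noteq> b" using assms(2) by blast
  define \<delta> where "\<delta> = dist a b / 4"
  have dpos: "\<delta> > 0" using ab by (simp add: \<delta>_def)
  have bs: "ball c e \<in> sets M" for c e using sM by simp
  have pa: "measure M (ball a \<delta>) > 0"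
    using assms(1) dpos unfolding mm_space_def by (simp add: emeasure_eq_measure)
  have pb: "measure M (ball b \<delta>) > 0"
    using assms(1) dpos unfolding mm_space_def by (simp add: emeasure_eq_measure)
  define \<eta> where "\<eta> = min (measure M (ball a \<delta>)) (measure M (ball b \<delta>))"
  have epos: "\<eta> > 0" using pa pb by (simp add: \<eta>_def)
  have "measure M (ball c \<delta>) \<le> 1 - \<eta>" for c
  proof -
    have "ball c \<delta> \<inter> ball a \<delta> = {} \<or> ball c \<delta> \<inter> ball b \<delta> = {}"
    proof (rule ccontr)
      assume "\<not> ?thesis"
      then obtain y z where y: "y \<in> ball c \<delta>" "y \<in> ball a \<delta>" and z: "z \<in> ball c \<delta>" "z \<in> ball b \<delta>" by blast
      have "dist a b \<le> dist a y + dist y c + dist c z + dist z b"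
      proof -
        have "dist a b \<le> dist a y + dist y b" by (rule dist_triangle)
        moreover have "dist y b \<le> dist y c + dist c b" by (rule dist_triangle)
        moreover have "dist c b \<le> dist c z + dist z b" by (rule dist_triangle)
        ultimately show ?thesis by linarith
      qed
      also have "\<dots> < 4 * \<delta>" using y z by (simp add: dist_commute)
      finally show False by (simp add: \<delta>_def)
    qed
    then obtain e where e: "e = a \<or> e = b" "ball c \<delta> \<inter> ball e \<delta> = {}" by blast
    have "measure M (ball c \<delta>) + measure M (ball e \<delta>) = measure M (ball c \<delta> \<union> ball e \<delta>)"
      using e(2) bs by (simp add: finite_measure_Union)
    also have "\<dots> \<le> 1" by (rule prob_le_1)
    finally show ?thesis using e(1) by (auto simp: \<eta>_def)
  qed
  then show ?thesis using that dpos epos by blast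
qed


lemma count_bound:
  fixes x y :: "nat \<Rightarrow> 'a::metric_space"
  assumes d: "\<delta> > 0" and p: "1 \<le> p" and lt: "lp_dist p n x y < r"
  shows "real (card {i\<in>{..<n}. \<delta> \<le> dist (x i) (y i)}) < r powr p / \<delta> powr p"
proof -
  define S where "S = {i\<in>{..<n}. \<delta> \<le> dist (x i) (y i)}"
  define s where "s = (\<Sum>i<n. dist (x i) (y i) powr p)"
  have s0: "s \<ge> 0" unfolding s_def by (intro sum_nonneg) simp
  have ld: "lp_dist p n x y = s powr (1/p)" by (simp add: lp_dist_def s_def)
  have "s = (s powr (1/p)) powr p" using p s0 by (simp add: powr_powr)
  also have "\<dots> < r powr p"
    using lt ld p by (intro powr_less_mono2) auto
  finally have sr: "s < r powr p" .
  have "real (card S) * \<delta> powr p \<le> (\<Sum>i\<in>S. dist (x i) (y i) powr p)"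
  proof -
    have "\<And>i. i \<in> S \<Longrightarrow> \<delta> powr p \<le> dist (x i) (y i) powr p"
      using d p by (auto simp: S_def intro: powr_mono2)
    then show ?thesis using sum_bounded_below[of S "\<delta> powr p" "\<lambda>i. dist (x i) (y i) powr p"] by simp
  qed
  also have "\<dots> \<le> s" unfolding s_def
    by (intro sum_mono2) (auto simp: S_def)
  finally have "real (card S) * \<delta> powr p < r powr p" using sr by linarith
  then show ?thesis using d by (simp add: S_def pos_less_divide_eq)
qed

lemma main_bound:
  fixes M :: "'a::polish_space measure"
  assumes mm: "mm_space M" and d: "\<delta> > 0" and bl: "\<And>c. measure M (ball c \<delta>) \<le> 1 - \<eta>"
    and p: "1 \<le> p" and x: "x \<in> space (prod_mm M n)"
  shows "measure (prod_mm M n) (lp_ball M p n x r) \<le> 2 ^ (nat (ceiling (r powr p / \<delta> powr p))) * (1 - \<eta>/2) ^ n"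
proof -
  define K where "K = nat (ceiling (r powr p / \<delta> powr p))"
  interpret prob_space M using mm by (simp add: mm_space_def)
  have sM: "sets M = sets borel" using mm by (simp add: mm_space_def)
  interpret P: product_sigma_finite "\<lambda>_. M"
    by (simp add: product_sigma_finite_def sigma_finite_measure_axioms)
  interpret Q: prob_space "prod_mm M n"
    unfolding prod_mm_def by (intro prob_space_PiM) (simp add: prob_space_axioms)
  have bs: "ball c e \<in> sets M" for c e using sM by simp
  have eta1: "\<eta> \<le> 1" using bl[of undefined] measure_nonneg[of M "ball undefined \<delta>"] by linarith
  define g where "g i y = (1/2::real) + 1/2 * indicator (ball (x i) \<delta>) y" for i y
  have gint: "integrable M (g i)" for i
    unfolding g_def using bs by (intro Bochner_Integration.integrable_add integrable_mult_right) (auto intro!: integrable_real_indicator simp: emeasure_eq_measure)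
  have gI: "integral\<^sup>L M (g i) = 1/2 + 1/2 * measure M (ball (x i) \<delta>)" for i
    unfolding g_def using bs by (subst Bochner_Integration.integral_add) (auto intro!: integrable_mult_right integrable_real_indicator simp: emeasure_eq_measure prob_space)
  have g0: "0 \<le> g i y" for i y by (simp add: g_def)
  define F where "F y = 2 ^ K * (\<Prod>i<n. g i (y i))" for y
  have Fint: "integrable (prod_mm M n) F"
    unfolding F_def prod_mm_def
    by (intro integrable_mult_right P.product_integrable_prod gint) auto
  have "integral\<^sup>L (prod_mm M n) F = 2 ^ K * (\<Prod>i<n. integral\<^sup>L M (g i))"
    unfolding F_def prod_mm_def
    by (simp add: P.product_integral_prod gint)
  also have "\<dots> \<le> 2 ^ K * (\<Prod>i<n. 1 - \<eta>/2)"
  proof -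
    have "0 \<le> integral\<^sup>L M (g i) \<and> integral\<^sup>L M (g i) \<le> 1 - \<eta>/2" for i
      using bl[of "x i"] measure_nonneg[of M "ball (x i) \<delta>"] by (simp add: gI)
    then show ?thesis by (intro mult_left_mono prod_mono) auto
  qed
  finally have FI: "integral\<^sup>L (prod_mm M n) F \<le> 2 ^ K * (1 - \<eta>/2) ^ n" by simp
  have pw: "indicator (lp_ball M p n x r) y \<le> F y" for y
  proof (cases "y \<in> lp_ball M p n x r")
    case False
    then show ?thesis by (simp add: F_def g0 prod_nonneg)
  next
    case True
    define S where "S = {i\<in>{..<n}. \<delta> \<le> dist (x i) (y i)}"
    have "real (card S) < r powr p / \<delta> powr p"
      unfolding S_def using True d p by (intro count_bound) (auto simp: lp_ball_def)
    then have "card S < K" unfolding K_def by linarith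
    have "(\<Prod>i<n. g i (y i)) = (\<Prod>i<n. if \<delta> \<le> dist (x i) (y i) then 1/2 else 1)"
      by (intro prod.cong) (auto simp: g_def dist_commute)
    also have "\<dots> = (1/2) ^ card S"
      by (simp add: prod.If_cases S_def Collect_conj_eq lessThan_def)
    finally have "F y = 2 ^ K * (1/2) ^ card S" by (simp add: F_def)
    also have "\<dots> = 2 ^ K / 2 ^ card S" by (simp add: power_divide)
    also have "\<dots> \<ge> 1"
      using power_increasing[of "card S" K "2::real"] \<open>card S < K\<close> by simp
    finally show ?thesis using True by simp
  qed
  have "measure (prod_mm M n) (lp_ball M p n x r) \<le> integral\<^sup>L (prod_mm M n) F"
  proof (cases "lp_ball M p n x r \<in> sets (prod_mm M n)")
    case True
    then have "measure (prod_mm M n) (lp_ball M p n x r) = integral\<^sup>L (prod_mm M n) (indicator (lp_ball M p n x r))"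
      by simp
    also have "\<dots> \<le> integral\<^sup>L (prod_mm M n) F"
      using True Fint pw by (intro integral_mono) (auto intro!: integrable_real_indicator simp: Q.emeasure_eq_measure)
    finally show ?thesis .
  next
    case False
    then show ?thesis using Fint
      by (simp add: measure_notin_sets F_def g0 prod_nonneg integral_nonneg)
  qed
  with FI show ?thesis by (simp add: K_def)
qed


theorem lemma4p6:
  fixes M :: "'a::polish_space measure" and p r :: real
  assumes "mm_space M"
    and "\<exists>x y :: 'a. x \<noteq> y"
    and "1 \<le> p"
    and "r > 0"
  shows "(\<lambda>n. SUP x \<in> space (prod_mm M n). measure (prod_mm M n) (lp_ball M p n x r))
           \<longlonglongrightarrow> 0"
proof -
  obtain \<delta> \<eta> :: real where d: "\<delta> > 0" and e: "\<eta> > 0" and bl: "\<And>c. measure M (ball c \<delta>) \<le> 1 - \<eta>"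
    using ball_sep[OF assms(1,2)] by blast
  have eta1: "\<eta> \<le> 1" using bl[of undefined] measure_nonneg[of M "ball undefined \<delta>"] by linarith
  define K where "K = nat (ceiling (r powr p / \<delta> powr p))"
  define B where "B n = 2 ^ K * (1 - \<eta>/2) ^ n" for n :: nat
  define f where "f n = (SUP x \<in> space (prod_mm M n). measure (prod_mm M n) (lp_ball M p n x r))" for n
  have bnd: "measure (prod_mm M n) (lp_ball M p n x r) \<le> B n" if "x \<in> space (prod_mm M n)" for n x
    unfolding B_def K_def using main_bound[OF assms(1) d bl assms(3) that] .
  have ne: "space (prod_mm M n) \<noteq> {}" for n
    using assms(1) by (auto simp: prod_mm_def mm_space_def dest: prob_space.not_empty)
  have up: "f n \<le> B n" for n
    unfolding f_def using ne bnd by (intro cSUP_least) auto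
  have lo: "0 \<le> f n" for n
  proof -
    obtain x0 where x0: "x0 \<in> space (prod_mm M n)" using ne by blast
    have "bdd_above ((\<lambda>x. measure (prod_mm M n) (lp_ball M p n x r)) ` space (prod_mm M n))"
      using bnd by (intro bdd_aboveI2) auto
    then show ?thesis unfolding f_def
      by (intro cSUP_upper2[OF _ x0]) auto
  qed
  have "B \<longlonglongrightarrow> 0"
    unfolding B_def using e eta1 by (intro tendsto_mult_right_zero LIMSEQ_power_zero) auto
  then have "f \<longlonglongrightarrow> 0"
    using lo up by (intro tendsto_sandwich[of "\<lambda>_. 0" f _ B]) auto
  then show ?thesis unfolding f_def[abs_def] .
qed

end
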